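(* Let $H_0,H_1$ be complex Hilbert spaces, $G$ a densely defined closed operator from $H_0$ into $H_1$ and $D$ a densely defined closed operator from $H_1$ into $H_0$ with $-G^*\subset D$. Then $\mathrm{BD}(G)=\ker(I-DG)$ and $\mathrm{BD}(D)=\ker(I-GD)$.
   Context: $\mathring D=-G^*$, $\mathring G=-D^*$. Domains carry graph inner products, e.g. $(u,v)_{\mathrm{dom}(G)}=(u,v)_{H_0}+(Gu,Gv)_{H_1}$. $\mathrm{BD}(G)$ is the orthogonal complement of $\mathrm{dom}(\mathring G)$ in $\mathrm{dom}(G)$ and $\mathrm{BD}(D)$ the orthogonal complement of $\mathrm{dom}(\mathring D)$ in $\mathrm{dom}(D)$. $\ker(I-DG)=\{u\in\mathrm{dom}(G):Gu\in\mathrm{dom}(D),\ DGu=u\}$ and $\ker(I-GD)=\{q\in\mathrm{dom}(D):Dq\in\mathrm{dom}(G),\ GDq=q\}$. *)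

theory Defs
  imports "HOL-Analysis.Analysis"
begin

text \<open>A complex Hilbert space is a type of class complex_inner_space that is also complete_space.
  The inner product is linear in the second and conjugate-linear in the first argument;
  the norm (hence metric and topology) is the one induced by the inner product.\<close>

class complex_inner_space = real_normed_vector +
  fixes scaleC :: "complex \<Rightarrow> 'a \<Rightarrow> 'a"
    and cinner :: "'a \<Rightarrow> 'a \<Rightarrow> complex"
  assumes scaleC_add_right: "scaleC a (x + y) = scaleC a x + scaleC a y"
    and scaleC_add_left: "scaleC (a + b) x = scaleC a x + scaleC b x"
    and scaleC_scaleC: "scaleC a (scaleC b x) = scaleC (a * b) x"
    and scaleC_one: "scaleC 1 x = x"
    and scaleC_of_real: "scaleC (complex_of_real r) x = scaleR r x"
    and cinner_conj: "cinner x y = cnj (cinner y x)"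
    and cinner_add_right: "cinner x (y + z) = cinner x y + cinner x z"
    and cinner_scaleC_right: "cinner x (scaleC a y) = a * cinner x y"
    and cinner_self_nonneg: "0 \<le> Re (cinner x x)"
    and norm_cinner: "norm x = sqrt (Re (cinner x x))"

type_synonym ('a, 'b) lop = "'a set \<times> ('a \<Rightarrow> 'b)"

definition opdom :: "('a, 'b) lop \<Rightarrow> 'a set" where "opdom A = fst A"
definition opfun :: "('a, 'b) lop \<Rightarrow> 'a \<Rightarrow> 'b" where "opfun A = snd A"

definition csubspace :: "'a::complex_inner_space set \<Rightarrow> bool" where
  "csubspace S \<longleftrightarrow> 0 \<in> S \<and> (\<forall>x\<in>S. \<forall>y\<in>S. x + y \<in> S) \<and> (\<forall>a. \<forall>x\<in>S. scaleC a x \<in> S)"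

definition linear_op :: "('a::complex_inner_space, 'b::complex_inner_space) lop \<Rightarrow> bool" where
  "linear_op A \<longleftrightarrow> csubspace (opdom A)
     \<and> (\<forall>x\<in>opdom A. \<forall>y\<in>opdom A. opfun A (x + y) = opfun A x + opfun A y)
     \<and> (\<forall>a. \<forall>x\<in>opdom A. opfun A (scaleC a x) = scaleC a (opfun A x))"

definition densely_defined :: "('a::complex_inner_space, 'b::complex_inner_space) lop \<Rightarrow> bool" where
  "densely_defined A \<longleftrightarrow> linear_op A \<and> closure (opdom A) = UNIV"

definition closed_op :: "('a::complex_inner_space, 'b::complex_inner_space) lop \<Rightarrow> bool" where
  "closed_op A \<longleftrightarrow> closed {(x, opfun A x) | x. x \<in> opdom A}"

definition adj :: "('a::complex_inner_space, 'b::complex_inner_space) lop \<Rightarrow> ('b, 'a) lop" where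
  "adj A = ({y. \<exists>z. \<forall>x\<in>opdom A. cinner (opfun A x) y = cinner x z},
            \<lambda>y. SOME z. \<forall>x\<in>opdom A. cinner (opfun A x) y = cinner x z)"

definition neg_op :: "('a, 'b::uminus) lop \<Rightarrow> ('a, 'b) lop" where
  "neg_op A = (opdom A, \<lambda>x. - opfun A x)"

definition op_le :: "('a, 'b) lop \<Rightarrow> ('a, 'b) lop \<Rightarrow> bool" where
  "op_le A B \<longleftrightarrow> opdom A \<subseteq> opdom B \<and> (\<forall>x\<in>opdom A. opfun A x = opfun B x)"

text \<open>ring_op D is the operator G-ring = -D*; so D-ring = ring_op G.\<close>

definition ring_op :: "('b::complex_inner_space, 'a::complex_inner_space) lop \<Rightarrow> ('a, 'b) lop" where
  "ring_op D = neg_op (adj D)"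

definition graph_inner :: "('a::complex_inner_space, 'b::complex_inner_space) lop \<Rightarrow> 'a \<Rightarrow> 'a \<Rightarrow> complex" where
  "graph_inner A u v = cinner u v + cinner (opfun A u) (opfun A v)"

definition BD :: "('a::complex_inner_space, 'b::complex_inner_space) lop \<Rightarrow> ('b, 'a) lop \<Rightarrow> 'a set" where
  "BD G D = {u \<in> opdom G. \<forall>v \<in> opdom (ring_op D). graph_inner G u v = 0}"

definition ker_I_comp :: "('b, 'a) lop \<Rightarrow> ('a, 'b) lop \<Rightarrow> 'a set" where
  "ker_I_comp A B = {u \<in> opdom B. opfun B u \<in> opdom A \<and> opfun A (opfun B u) = u}"

end

theory Submission
  imports Defs
begin



lemma cinner_add_left: "cinner (x + y) z = cinner x z + cinner y z"
proof -
  have "cinner (x+y) z = cnj (cinner z (x+y))" by (rule cinner_conj)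
  also have "\<dots> = cnj (cinner z x) + cnj (cinner z y)" by (simp add: cinner_add_right)
  also have "\<dots> = cinner x z + cinner y z" by (simp only: cinner_conj[of x z] cinner_conj[of y z])
  finally show ?thesis .
qed

lemma cinner_zero_right[simp]: "cinner x 0 = 0"
  using cinner_add_right[of x 0 0] by simp

lemma cinner_zero_left[simp]: "cinner 0 x = 0"
  by (subst cinner_conj) simp

lemma cinner_minus_right: "cinner x (- y) = - cinner x y"
proof -
  have "cinner x y + cinner x (- y) = 0" using cinner_add_right[of x y "-y"] by simp
  then show ?thesis by (simp only: add_eq_0_iff)
qed

lemma cinner_minus_left: "cinner (- x) y = - cinner x y"
proof -
  have "cinner (- x) y = cnj (cinner y (- x))" by (rule cinner_conj)
  also have "\<dots> = - cnj (cinner y x)" by (simp add: cinner_minus_right)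
  also have "\<dots> = - cinner x y" by (simp only: cinner_conj[of x y])
  finally show ?thesis .
qed

lemma cinner_diff_right: "cinner x (y - z) = cinner x y - cinner x z"
  using cinner_add_right[of x y "-z"] cinner_minus_right by simp

lemma cinner_diff_left: "cinner (x - y) z = cinner x z - cinner y z"
  using cinner_add_left[of x "-y" z] cinner_minus_left by simp

lemma cinner_scaleR_right: "cinner x (scaleR r y) = complex_of_real r * cinner x y"
  by (simp flip: scaleC_of_real add: cinner_scaleC_right)

lemma cinner_scaleC_left: "cinner (scaleC a x) y = cnj a * cinner x y"
proof -
  have "cinner (scaleC a x) y = cnj (cinner y (scaleC a x))" by (rule cinner_conj)
  also have "\<dots> = cnj a * cnj (cinner y x)" by (simp add: cinner_scaleC_right)
  also have "\<dots> = cnj a * cinner x y" by (simp only: cinner_conj[of x y])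
  finally show ?thesis .
qed

lemma norm_sq: "(norm x)^2 = Re (cinner x x)"
  using norm_cinner[of x] cinner_self_nonneg[of x] by simp

lemma cinner_self_Im: "Im (cinner x x) = 0"
proof -
  have "Im (cinner x x) = Im (cnj (cinner x x))" using cinner_conj[of x x] by simp
  then show ?thesis by simp
qed

lemma cinner_self_eq_zero: "cinner x x = 0 \<longleftrightarrow> x = 0"
proof
  assume "cinner x x = 0"
  then have "norm x = 0" using norm_cinner[of x] by simp
  then show "x = 0" by simp
qed simp

lemma norm_add_sq: "(norm (x + y))^2 = (norm x)^2 + (norm y)^2 + 2 * Re (cinner x y)"
proof -
  have "cinner (x+y) (x+y) = cinner x x + cinner x y + cnj (cinner x y) + cinner y y"
    by (simp add: cinner_add_left cinner_add_right cinner_conj[of y x])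
  then show ?thesis by (simp add: norm_sq)
qed

lemma Re_cinner_polar: "Re (cinner x y) = ((norm (x + y))^2 - (norm (x - y))^2) / 4"
  using norm_add_sq[of x y] norm_add_sq[of x "-y"] cinner_minus_right[of x y] by simp

lemma tendsto_cinner_left:
  fixes f :: "'c \<Rightarrow> 'a::complex_inner_space"
  assumes "(f \<longlongrightarrow> l) F"
  shows "((\<lambda>n. cinner (f n) w) \<longlongrightarrow> cinner l w) F"
proof -
  have re: "((\<lambda>n. Re (cinner (f n) y)) \<longlongrightarrow> Re (cinner l y)) F" for y
    unfolding Re_cinner_polar
    by (intro tendsto_intros assms) simp
  have "Im (cinner u w) = - Re (cinner u (scaleC \<i> w))" for u :: 'a
    by (simp add: cinner_scaleC_right)
  then have im: "((\<lambda>n. Im (cinner (f n) w)) \<longlongrightarrow> Im (cinner l w)) F"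
    using tendsto_minus[OF re[of "scaleC \<i> w"]] by simp
  show ?thesis using re[of w] im by (simp add: tendsto_complex_iff)
qed



lemma real_quad_zero:
  fixes c N :: real
  assumes "N \<ge> 0" and h: "\<And>t. 0 \<le> - 2 * t * c + t^2 * N"
  shows "c = 0"
proof (rule ccontr)
  assume "c \<noteq> 0"
  define t where "t = c / (N + 1)"
  have ct: "c = t * (N + 1)" unfolding t_def using assms(1) by simp
  have "t \<noteq> 0" using \<open>c \<noteq> 0\<close> ct by auto
  have "0 \<le> - 2 * t * c + t^2 * N" by (rule h)
  also have "\<dots> = - (t^2 * (N + 2))" unfolding ct by (simp add: algebra_simps power2_eq_square)
  also have "\<dots> < 0" using \<open>t \<noteq> 0\<close> assms(1) by simp
  finally show False by simp
qed

lemma projection_exists: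
  fixes S :: "'c::{complex_inner_space, complete_space} set"
  assumes cl: "closed S" and z0: "0 \<in> S"
    and add: "\<And>x y. x \<in> S \<Longrightarrow> y \<in> S \<Longrightarrow> x + y \<in> S"
    and sc: "\<And>a x. x \<in> S \<Longrightarrow> scaleC a x \<in> S"
  shows "\<exists>a\<in>S. \<forall>g\<in>S. cinner (z - a) g = 0"
proof -
  have scR: "scaleR r x \<in> S" if "x \<in> S" for r x
    using sc[OF that, of "complex_of_real r"] by (simp add: scaleC_of_real)
  define d where "d = Inf ((\<lambda>s. norm (z - s)) ` S)"
  have bdd: "bdd_below ((\<lambda>s. norm (z - s)) ` S)" by (rule bdd_belowI[of _ 0]) auto
  have d_le: "d \<le> norm (z - s)" if "s \<in> S" for s
    unfolding d_def by (rule cInf_lower) (use that bdd in auto)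
  have d0: "0 \<le> d" using d_le[OF z0] unfolding d_def
    by (intro cInf_greatest) (use z0 in auto)
  have "\<exists>s\<in>S. (norm (z - s))^2 < d^2 + 1 / real (Suc n)" for n
  proof -
    have "d < sqrt (d^2 + 1 / real (Suc n))"
      by (rule real_less_rsqrt) simp
    then obtain s where s: "s \<in> S" "norm (z - s) < sqrt (d^2 + 1 / real (Suc n))"
      unfolding d_def using z0 by (subst (asm) cInf_less_iff) (use bdd in auto)
    then have "(norm (z - s))^2 < d^2 + 1 / real (Suc n)"
    proof -
      have "(norm (z - s))^2 < (sqrt (d^2 + 1 / real (Suc n)))^2"
        using s(2) by (intro power_strict_mono) auto
      also have "\<dots> = d^2 + 1 / real (Suc n)" by (simp add: add_nonneg_nonneg)
      finally show ?thesis .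
    qed
    with s show ?thesis by blast
  qed
  then obtain f where fS: "\<And>n. f n \<in> S"
    and fl: "\<And>n. (norm (z - f n))^2 < d^2 + 1 / real (Suc n)" by metis
  have par: "(norm (f m - f n))^2 \<le> 2 / real (Suc m) + 2 / real (Suc n)" for m n
  proof -
    define a where "a = z - f n" define b where "b = z - f m"
    have mid: "scaleR (1/2) (f n + f m) \<in> S" using fS add scR by blast
    have "a + b = scaleR 2 (z - scaleR (1/2) (f n + f m))"
      unfolding a_def b_def by (simp add: algebra_simps scaleR_2)
    then have nab: "(norm (a + b))^2 = 4 * (norm (z - scaleR (1/2) (f n + f m)))^2"
      by (simp add: power2_eq_square)
    have "d^2 \<le> (norm (z - scaleR (1/2) (f n + f m)))^2"
      using d_le[OF mid] d0 by (simp add: power_mono)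
    have "(norm (a + b))^2 + (norm (a - b))^2 = 2 * (norm a)^2 + 2 * (norm b)^2"
      using norm_add_sq[of a b] norm_add_sq[of a "-b"] cinner_minus_right[of a b] by simp
    moreover have "a - b = f m - f n" unfolding a_def b_def by simp
    ultimately show ?thesis
      using fl[of n] fl[of m] nab \<open>d^2 \<le> _\<close> unfolding a_def b_def by simp
  qed
  have "Cauchy f"
  proof (rule metric_CauchyI)
    fix e :: real assume "0 < e"
    obtain N where N0: "4 / e^2 < real N"
      using reals_Archimedean2 by blast
    then have N: "4 / e^2 < real (Suc N)" by simp
    show "\<exists>M. \<forall>m\<ge>M. \<forall>n\<ge>M. dist (f m) (f n) < e"
    proof (intro exI allI impI)
      fix m n assume mn: "N \<le> m" "N \<le> n"
      have "2 / real (Suc m) \<le> 2 / real (Suc N)" "2 / real (Suc n) \<le> 2 / real (Suc N)"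
        using mn by (auto intro!: divide_left_mono)
      moreover have "4 / real (Suc N) < e^2"
        using N \<open>0 < e\<close> by (simp add: field_simps)
      ultimately have "(dist (f m) (f n))^2 < e^2"
        using par[of m n] by (simp add: dist_norm)
      then show "dist (f m) (f n) < e"
        using \<open>0 < e\<close> by (simp add: power_less_imp_less_base)
    qed
  qed
  then obtain a where fa: "f \<longlonglongrightarrow> a" using convergent_eq_Cauchy by blast
  have aS: "a \<in> S" using closed_sequentially[OF cl] fS fa by blast
  have "(norm (z - a))^2 \<le> d^2"
  proof (rule LIMSEQ_le)
    show "(\<lambda>n. (norm (z - f n))^2) \<longlonglongrightarrow> (norm (z - a))^2"
      by (intro tendsto_intros fa)
    show "(\<lambda>n. d^2 + 1 / real (Suc n)) \<longlonglongrightarrow> d^2"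
      using tendsto_add[OF tendsto_const LIMSEQ_inverse_real_of_nat, of "d^2"]
      by (simp add: inverse_eq_divide)
    show "\<exists>N. \<forall>n\<ge>N. (norm (z - f n))^2 \<le> d^2 + 1 / real (Suc n)"
      using fl less_imp_le by blast
  qed
  then have amin: "norm (z - a) \<le> norm (z - s)" if "s \<in> S" for s
    using d_le[OF that] d0 by (meson norm_ge_zero order_trans power2_le_imp_le)
  have orth_re: "Re (cinner (z - a) g) = 0" if g: "g \<in> S" for g
  proof (rule real_quad_zero[of "(norm g)^2"])
    fix t :: real
    have "a + scaleR t g \<in> S" using add scR aS g by blast
    then have "(norm (z - a))^2 \<le> (norm ((z - a) + - scaleR t g))^2"
      using amin by (simp add: power_mono diff_diff_eq)
    also have "\<dots> = (norm (z - a))^2 + t^2 * (norm g)^2 - 2 * t * Re (cinner (z - a) g)"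
      by (simp only: norm_add_sq cinner_minus_right cinner_scaleR_right norm_minus_cancel
          norm_scaleR power_mult_distrib) (simp add: power2_abs)
    finally show "0 \<le> - 2 * t * Re (cinner (z - a) g) + t^2 * (norm g)^2" by simp
  qed simp
  have "cinner (z - a) g = 0" if g: "g \<in> S" for g
  proof -
    have "Re (cinner (z - a) (scaleC \<i> g)) = 0" using orth_re sc g by blast
    then have "Im (cinner (z - a) g) = 0" by (simp add: cinner_scaleC_right)
    with orth_re[OF g] show ?thesis by (simp add: complex_eq_iff)
  qed
  with aS show ?thesis by blast
qed



instantiation prod :: (complex_inner_space, complex_inner_space) complex_inner_space
begin
definition scaleC_prod_def: "scaleC a x = (scaleC a (fst x), scaleC a (snd x))"
definition cinner_prod_def: "cinner x y = cinner (fst x) (fst y) + cinner (snd x) (snd y)"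
instance
proof
  fix a b :: complex and x y z :: "'a \<times> 'b" and r :: real
  show "scaleC a (x + y) = scaleC a x + scaleC a y"
    by (simp add: scaleC_prod_def scaleC_add_right)
  show "scaleC (a + b) x = scaleC a x + scaleC b x"
    by (simp add: scaleC_prod_def scaleC_add_left)
  show "scaleC a (scaleC b x) = scaleC (a * b) x"
    by (simp add: scaleC_prod_def scaleC_scaleC)
  show "scaleC 1 x = x"
    by (simp add: scaleC_prod_def scaleC_one)
  show "scaleC (complex_of_real r) x = r *\<^sub>R x"
    by (simp add: scaleC_prod_def scaleC_of_real scaleR_prod_def)
  show "cinner x y = cnj (cinner y x)"
    by (simp add: cinner_prod_def cinner_conj[of "fst x" "fst y"] cinner_conj[of "snd x" "snd y"])
  show "cinner x (y + z) = cinner x y + cinner x z"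
    by (simp add: cinner_prod_def cinner_add_right)
  show "cinner x (scaleC a y) = a * cinner x y"
    by (simp add: cinner_prod_def scaleC_prod_def cinner_scaleC_right algebra_simps)
  show "0 \<le> Re (cinner x x)"
    by (simp add: cinner_prod_def cinner_self_nonneg add_nonneg_nonneg)
  show "norm x = sqrt (Re (cinner x x))"
    by (simp add: cinner_prod_def norm_prod_def norm_sq)
qed
end

lemma adj_prop:
  assumes "y \<in> opdom (adj A)" "x \<in> opdom A"
  shows "cinner (opfun A x) y = cinner x (opfun (adj A) y)"
proof -
  from assms(1) obtain z where "\<forall>x\<in>opdom A. cinner (opfun A x) y = cinner x z"
    by (auto simp: adj_def opdom_def)
  then have "\<forall>x\<in>opdom A. cinner (opfun A x) y = cinner x (opfun (adj A) y)"
    unfolding adj_def opfun_def snd_conv by (rule someI)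
  with assms(2) show ?thesis by blast
qed

lemma dense_orth_zero:
  fixes w :: "'a::complex_inner_space"
  assumes "closure S = UNIV" and "\<And>x. x \<in> S \<Longrightarrow> cinner x w = 0"
  shows "w = 0"
proof -
  have "w \<in> closure S" using assms(1) by simp
  then obtain f where f: "\<And>n. f n \<in> S" "f \<longlonglongrightarrow> w" by (auto simp: closure_sequential)
  have "(\<lambda>n. cinner (f n) w) \<longlonglongrightarrow> cinner w w" by (rule tendsto_cinner_left[OF f(2)])
  moreover have "(\<lambda>n. cinner (f n) w) = (\<lambda>n. 0)" using f(1) assms(2) by auto
  ultimately have "cinner w w = 0" using LIMSEQ_unique[of "\<lambda>n. 0"] by auto
  then show ?thesis by (simp add: cinner_self_eq_zero)
qed

lemma adj_intro:
  assumes dd: "closure (opdom A) = UNIV"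
    and h: "\<forall>x\<in>opdom A. cinner (opfun A x) y = cinner x z"
  shows "y \<in> opdom (adj A) \<and> opfun (adj A) y = z"
proof -
  have y: "y \<in> opdom (adj A)" using h by (auto simp: adj_def opdom_def)
  have "cinner x (opfun (adj A) y - z) = 0" if "x \<in> opdom A" for x
    using adj_prop[OF y that] h that by (simp add: cinner_diff_right)
  then have "\<And>x. x \<in> opdom A \<Longrightarrow> cinner x (opfun (adj A) y - z) = 0" .
  then have "opfun (adj A) y - z = 0" by (rule dense_orth_zero[OF dd])
  with y show ?thesis by simp
qed

lemma biadj:
  fixes A :: "('a::{complex_inner_space, complete_space}, 'b::{complex_inner_space, complete_space}) lop"
  assumes dd: "densely_defined A" and cl: "closed_op A"
    and h: "\<forall>y\<in>opdom (adj A). cinner (opfun (adj A) y) v = cinner y w"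
  shows "v \<in> opdom A \<and> opfun A v = w"
proof -
  define S where "S = {(x, opfun A x) | x. x \<in> opdom A}"
  have lin: "linear_op A" and den: "closure (opdom A) = UNIV" using dd by (auto simp: densely_defined_def)
  have sub: "csubspace (opdom A)" using lin by (simp add: linear_op_def)
  have Aadd: "opfun A (x + y) = opfun A x + opfun A y" if "x \<in> opdom A" "y \<in> opdom A" for x y
    using lin that by (simp add: linear_op_def)
  have Asc: "opfun A (scaleC c x) = scaleC c (opfun A x)" if "x \<in> opdom A" for c x
    using lin that by (simp add: linear_op_def)
  have d0: "0 \<in> opdom A" using sub by (simp add: csubspace_def)
  have A0: "opfun A 0 = 0" using Aadd[OF d0 d0] by simp
  have "closed S" using cl by (simp add: closed_op_def S_def)
  moreover have "0 \<in> S" using d0 A0 unfolding S_def zero_prod_def by force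
  moreover have "x + y \<in> S" if "x \<in> S" "y \<in> S" for x y
    using that sub Aadd unfolding S_def csubspace_def by force
  moreover have "scaleC c x \<in> S" if "x \<in> S" for c x
    using that sub Asc unfolding S_def csubspace_def scaleC_prod_def by force
  ultimately obtain a where aS: "a \<in> S" and orth: "\<forall>g\<in>S. cinner ((v, w) - a) g = 0"
    using projection_exists[of S "(v, w)"] by blast
  from aS obtain x0 where x0: "x0 \<in> opdom A" "a = (x0, opfun A x0)" unfolding S_def by blast
  define p where "p = v - x0" define q where "q = w - opfun A x0"
  have o: "cinner p x + cinner q (opfun A x) = 0" if "x \<in> opdom A" for x
    using orth that x0 unfolding S_def p_def q_def by (force simp: cinner_prod_def)
  have "cinner (opfun A x) q = cinner x (- p)" if "x \<in> opdom A" for x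
  proof -
    have "cnj (cinner p x + cinner q (opfun A x)) = 0" using o[OF that] by simp
    then have "cinner x p + cinner (opfun A x) q = 0"
      by (simp add: cinner_conj[of p x] cinner_conj[of q "opfun A x"])
    then show ?thesis by (simp add: cinner_minus_right add_eq_0_iff add.commute)
  qed
  then have qa: "q \<in> opdom (adj A) \<and> opfun (adj A) q = - p"
    using adj_intro[OF den] by blast
  then have "cinner (- p) v = cinner q w" using h by auto
  then have "- cinner p v = cinner q w" by (simp add: cinner_minus_left)
  then have e1: "cinner p v + cinner q w = 0" by (metis add.right_inverse)
  have "cinner p p + cinner q q = (cinner p v + cinner q w) - (cinner p x0 + cinner q (opfun A x0))"
    unfolding p_def q_def
    by (simp add: cinner_diff_right cinner_diff_left) 
  also have "\<dots> = 0" using e1 o[OF x0(1)] by simp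
  finally have "Re (cinner p p) + Re (cinner q q) = 0" by (metis plus_complex.sel(1) zero_complex.sel(1))
  then have "(norm p)^2 + (norm q)^2 = 0" by (simp add: norm_sq)
  then have "p = 0" "q = 0" by (simp_all add: add_nonneg_eq_0_iff)
  then show ?thesis using x0 unfolding p_def q_def by simp
qed

lemma opdom_neg[simp]: "opdom (neg_op A) = opdom A" by (simp add: neg_op_def opdom_def)
lemma opfun_neg[simp]: "opfun (neg_op A) x = - opfun A x" by (simp add: neg_op_def opfun_def)
lemma opdom_ring[simp]: "opdom (ring_op A) = opdom (adj A)" by (simp add: ring_op_def)

theorem lemma2p5:
  fixes G :: "('a::{complex_inner_space, complete_space}, 'b::{complex_inner_space, complete_space}) lop"
    and D :: "('b, 'a) lop"
  assumes "densely_defined G" and "closed_op G"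
    and "densely_defined D" and "closed_op D"
    and "op_le (neg_op (adj G)) D"
  shows "BD G D = ker_I_comp D G \<and> BD D G = ker_I_comp G D"
proof -
  have F2: "y \<in> opdom D \<and> opfun D y = - opfun (adj G) y" if "y \<in> opdom (adj G)" for y
    using assms(5) that unfolding op_le_def by auto
  have F1: "v \<in> opdom G \<and> opfun G v = - opfun (adj D) v" if v: "v \<in> opdom (adj D)" for v
  proof (rule biadj[OF assms(1,2)], intro ballI)
    fix y assume y: "y \<in> opdom (adj G)"
    have "cinner (opfun D y) v = cinner y (opfun (adj D) v)" using adj_prop[OF v] F2[OF y] by blast
    then have "- cinner (opfun (adj G) y) v = cinner y (opfun (adj D) v)"
      using F2[OF y] by (simp add: cinner_minus_left)
    then have "cinner (opfun (adj G) y) v = - cinner y (opfun (adj D) v)"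
      by (metis minus_minus)
    then show "cinner (opfun (adj G) y) v = cinner y (- opfun (adj D) v)"
      by (simp add: cinner_minus_right)
  qed
  have P1: "BD G D = ker_I_comp D G"
  proof (rule set_eqI, rule iffI)
    fix u assume "u \<in> BD G D"
    then have u: "u \<in> opdom G" and o: "\<And>v. v \<in> opdom (adj D) \<Longrightarrow> cinner u v + cinner (opfun G u) (opfun G v) = 0"
      unfolding BD_def graph_inner_def by auto
    have "opfun G u \<in> opdom D \<and> opfun D (opfun G u) = u"
    proof (rule biadj[OF assms(3,4)], intro ballI)
      fix y assume y: "y \<in> opdom (adj D)"
      have "cinner u y = cinner (opfun G u) (opfun (adj D) y)"
        using o[OF y] F1[OF y] by (simp add: cinner_minus_right add_eq_0_iff)
      then have "cnj (cinner u y) = cnj (cinner (opfun G u) (opfun (adj D) y))" by simp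
      then show "cinner (opfun (adj D) y) (opfun G u) = cinner y u"
        by (simp add: cinner_conj[of u y] cinner_conj[of "opfun (adj D) y" "opfun G u"])
    qed
    with u show "u \<in> ker_I_comp D G" unfolding ker_I_comp_def by simp
  next
    fix u assume "u \<in> ker_I_comp D G"
    then have u: "u \<in> opdom G" "opfun G u \<in> opdom D" "opfun D (opfun G u) = u"
      unfolding ker_I_comp_def by auto
    have "cinner u v + cinner (opfun G u) (opfun G v) = 0" if v: "v \<in> opdom (adj D)" for v
    proof -
      have "cinner (opfun G u) (opfun G v) = - cinner (opfun G u) (opfun (adj D) v)"
        using F1[OF v] by (simp add: cinner_minus_right)
      also have "\<dots> = - cinner u v" using adj_prop[OF v u(2)] u(3) by simp
      finally show ?thesis by simp
    qed
    with u show "u \<in> BD G D" unfolding BD_def graph_inner_def by simp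
  qed
  have P2: "BD D G = ker_I_comp G D"
  proof (rule set_eqI, rule iffI)
    fix u assume "u \<in> BD D G"
    then have u: "u \<in> opdom D" and o: "\<And>v. v \<in> opdom (adj G) \<Longrightarrow> cinner u v + cinner (opfun D u) (opfun D v) = 0"
      unfolding BD_def graph_inner_def by auto
    have "opfun D u \<in> opdom G \<and> opfun G (opfun D u) = u"
    proof (rule biadj[OF assms(1,2)], intro ballI)
      fix y assume y: "y \<in> opdom (adj G)"
      have "cinner u y = cinner (opfun D u) (opfun (adj G) y)"
        using o[OF y] F2[OF y] by (simp add: cinner_minus_right add_eq_0_iff)
      then have "cnj (cinner u y) = cnj (cinner (opfun D u) (opfun (adj G) y))" by simp
      then show "cinner (opfun (adj G) y) (opfun D u) = cinner y u"
        by (simp add: cinner_conj[of u y] cinner_conj[of "opfun (adj G) y" "opfun D u"])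
    qed
    with u show "u \<in> ker_I_comp G D" unfolding ker_I_comp_def by simp
  next
    fix u assume "u \<in> ker_I_comp G D"
    then have u: "u \<in> opdom D" "opfun D u \<in> opdom G" "opfun G (opfun D u) = u"
      unfolding ker_I_comp_def by auto
    have "cinner u v + cinner (opfun D u) (opfun D v) = 0" if v: "v \<in> opdom (adj G)" for v
    proof -
      have "cinner (opfun D u) (opfun D v) = - cinner (opfun D u) (opfun (adj G) v)"
        using F2[OF v] by (simp add: cinner_minus_right)
      also have "\<dots> = - cinner u v" using adj_prop[OF v u(2)] u(3) by simp
      finally show ?thesis by simp
    qed
    with u show "u \<in> BD D G" unfolding BD_def graph_inner_def by simp
  qed
  from P1 P2 show ?thesis ..
qed

end
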